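(* Let $p$ be a self-adjoint projection of $V$, let $g_0$ be an invertible self-adjoint transformation generating a $p$-quadric $\Phi_0$, and let $l_\lambda$ be self-adjoint transformations leaving $\operatorname{Im}p$ invariant with $l_\lambda^2=\mathrm{id}-\lambda g_0$ on $\operatorname{Im}p$ (as in the family constructed for the projection pencil of $p$ and $g_0^{-1}$, where $\Phi_\lambda$ is generated by $g_\lambda$ with $g_\lambda^{-1}=g_0^{-1}-\lambda p$). Let $\Psi\neq\Phi_0$ be a $p$-quadric belonging to the same projection pencil (of $p$ and $g_0^{-1}$), generated by $g_\mu$ with $g_\mu^{-1}=g_0^{-1}-\mu p$, $\mu\neq0$. If $u\in\Phi_0\cap\Psi\cap\operatorname{Im}p$, then $l_\lambda(u)\in\Psi$.
   Context: $V$ is a real vector space of dimension $n+1$ with a fixed indefinite inner product (nondegenerate symmetric bilinear form) $\langle\cdot,\cdot\rangle$; self-adjoint means $\langle g(x),y\rangle=\langle x,g(y)\rangle$. A projection is $p$ with $p^2=p$; $V=\operatorname{Im}p\oplus\operatorname{Ker}p$. The quadric generated by a self-adjoint $g$ is the zero set in $P(V)$ of $x\mapsto\langle x,g(x)\rangle$; its dual is given by $g^{-1}$. The projection pencil of $p$ and $g_0^{-1}$ consists of the quadrics whose dual transformations lie in $\operatorname{span}(g_0^{-1},p)$. A quadric generated by $g$ is a $p$-quadric if $g(u+v)=p(g(u))-v$ for all $u\in\operatorname{Im}p$, $v\in\operatorname{Ker}p$. *)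

theory Defs
  imports "HOL-Analysis.Analysis"
begin

definition indefinite_inner :: "('a::euclidean_space \<Rightarrow> 'a \<Rightarrow> real) \<Rightarrow> bool" where
  "indefinite_inner B \<longleftrightarrow> bilinear B \<and> (\<forall>x y. B x y = B y x)
     \<and> (\<forall>x. (\<forall>y. B x y = 0) \<longrightarrow> x = 0)
     \<and> (\<exists>x y. B x x > 0 \<and> B y y < 0)"

definition self_adjoint :: "('a \<Rightarrow> 'a \<Rightarrow> real) \<Rightarrow> ('a::real_vector \<Rightarrow> 'a) \<Rightarrow> bool" where
  "self_adjoint B g \<longleftrightarrow> linear g \<and> (\<forall>x y. B (g x) y = B x (g y))"

definition projection :: "('a::real_vector \<Rightarrow> 'a) \<Rightarrow> bool" where
  "projection p \<longleftrightarrow> linear p \<and> (\<forall>x. p (p x) = p x)"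

text \<open>The quadric generated by g, represented by its cone of representing vectors
  (a point [x] of P(V) lies on the quadric iff x is a nonzero element of this cone).\<close>
definition quadric :: "('a \<Rightarrow> 'a \<Rightarrow> real) \<Rightarrow> ('a::real_vector \<Rightarrow> 'a) \<Rightarrow> 'a set" where
  "quadric B g = {x. B x (g x) = 0}"

definition p_quadric :: "('a::real_vector \<Rightarrow> 'a) \<Rightarrow> ('a \<Rightarrow> 'a) \<Rightarrow> bool" where
  "p_quadric p g \<longleftrightarrow> (\<forall>u v. u \<in> range p \<longrightarrow> p v = 0 \<longrightarrow> g (u + v) = p (g u) - v)"

end

theory Submission
  imports Defs
begin

theorem mainTheorem5:
  fixes B :: "'a::euclidean_space \<Rightarrow> 'a \<Rightarrow> real"
    and p g0 gmu l :: "'a \<Rightarrow> 'a"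
    and lam mu :: real and u :: 'a
  assumes "indefinite_inner B"
    and "projection p" and "self_adjoint B p"
    and "self_adjoint B g0" and "bij g0" and "p_quadric p g0"
    and "self_adjoint B l" and "l ` range p \<subseteq> range p"
    and "\<forall>x\<in>range p. l (l x) = x - lam *\<^sub>R g0 x"
    and "\<forall>x\<in>range p. l (g0 x) = g0 (l x)"
    and "self_adjoint B gmu" and "bij gmu" and "p_quadric p gmu"
    and "\<forall>x. inv gmu x = inv g0 x - mu *\<^sub>R p x" and "mu \<noteq> 0"
    and "quadric B gmu \<noteq> quadric B g0"
    and "u \<in> quadric B g0" and "u \<in> quadric B gmu" and "u \<in> range p"
  shows "l u \<in> quadric B gmu"
proof -
  have lg0: "linear g0" and sg0: "\<And>x y. B (g0 x) y = B x (g0 y)" using assms(4) by (auto simp: self_adjoint_def)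
  have ll: "linear l" and sl: "\<And>x y. B (l x) y = B x (l y)" using assms(7) by (auto simp: self_adjoint_def)
  have lp: "linear p" and pp: "\<And>x. p (p x) = p x" using assms(2) by (auto simp: projection_def)
  have rp: "\<And>x. x \<in> range p \<longleftrightarrow> p x = x" using pp by (metis rangeE rangeI)
  have g0inv: "\<And>x. g0 (inv g0 x) = x" using assms(5) by (simp add: bij_is_surj surj_f_inv_f)
  have g0inj: "inj g0" using assms(5) bij_is_inj by blast
  have gminv1: "\<And>x. inv gmu (gmu x) = x" using assms(12) by (simp add: bij_is_inj)
  have gminv2: "\<And>x. gmu (inv gmu x) = x" using assms(12) by (simp add: bij_is_surj surj_f_inv_f)
  have gmp: "\<And>x. x \<in> range p \<Longrightarrow> gmu x \<in> range p"
  proof -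
    fix x assume "x \<in> range p"
    have "p 0 = 0" using lp linear_0 by blast
    then have "gmu (x + 0) = p (gmu x) - 0" using assms(13) \<open>x \<in> range p\<close> unfolding p_quadric_def by blast
    then show "gmu x \<in> range p" by simp
  qed
  have fwd: "\<And>x. x \<in> range p \<Longrightarrow> gmu x - mu *\<^sub>R g0 (gmu x) = g0 x"
  proof -
    fix x assume x: "x \<in> range p"
    let ?y = "gmu x"
    have "p ?y = ?y" using gmp x rp by blast
    have "x = inv g0 ?y - mu *\<^sub>R ?y" using assms(14) gminv1 \<open>p ?y = ?y\<close> by metis
    then have "g0 x = g0 (inv g0 ?y - mu *\<^sub>R ?y)" by (rule arg_cong)
    also have "\<dots> = g0 (inv g0 ?y) - mu *\<^sub>R g0 ?y"
      by (simp add: linear_diff[OF lg0] linear_scale[OF lg0])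
    finally have "g0 x = g0 (inv g0 ?y) - mu *\<^sub>R g0 ?y" .
    then show "?y - mu *\<^sub>R g0 ?y = g0 x" using g0inv by simp
  qed
  have uniq: "\<And>x z. z \<in> range p \<Longrightarrow> z - mu *\<^sub>R g0 z = g0 x \<Longrightarrow> z = gmu x"
  proof -
    fix x z assume z: "z \<in> range p" and e: "z - mu *\<^sub>R g0 z = g0 x"
    have "g0 (inv g0 z - mu *\<^sub>R z) = z - mu *\<^sub>R g0 z"
      by (simp add: linear_diff[OF lg0] linear_scale[OF lg0] g0inv)
    then have "inv g0 z - mu *\<^sub>R z = x" using e g0inj by (metis injD)
    then have "inv gmu z = x" using assms(14) z rp by metis
    then show "z = gmu x" using gminv2 by metis
  qed
  have comm: "\<And>x. x \<in> range p \<Longrightarrow> l (gmu x) = gmu (l x)"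
  proof -
    fix x assume x: "x \<in> range p"
    let ?y = "gmu x"
    have y: "?y \<in> range p" using gmp x by blast
    have ly: "l ?y \<in> range p" using y assms(8) by blast
    have lx: "l x \<in> range p" using x assms(8) by blast
    have "l ?y - mu *\<^sub>R g0 (l ?y) = l ?y - mu *\<^sub>R l (g0 ?y)" using assms(10) y by metis
    also have "\<dots> = l (?y - mu *\<^sub>R g0 ?y)" by (simp add: linear_diff[OF ll] linear_scale[OF ll])
    also have "\<dots> = l (g0 x)" using fwd x by simp
    also have "\<dots> = g0 (l x)" using assms(10) x by metis
    finally show "l ?y = gmu (l x)" using uniq ly by blast
  qed
  let ?y = "gmu u"
  have bu0: "B u (g0 u) = 0" using assms(17) by (simp add: quadric_def)
  have bum: "B u ?y = 0" using assms(18) by (simp add: quadric_def)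
  have bil: "bilinear B" using assms(1) by (simp add: indefinite_inner_def)
  have e: "?y - mu *\<^sub>R g0 ?y = g0 u" using fwd assms(19) by blast
  have m: "mu *\<^sub>R g0 ?y = ?y - g0 u" using e by (simp add: algebra_simps)
  have "mu * B u (g0 ?y) = B u (mu *\<^sub>R g0 ?y)" by (simp add: bilinear_rmul[OF bil])
  also have "\<dots> = B u ?y - B u (g0 u)" by (simp add: m bilinear_rsub[OF bil])
  finally have "mu * B u (g0 ?y) = 0" using bu0 bum by simp
  then have "B u (g0 ?y) = 0" using assms(15) by simp
  then have bg: "B (g0 u) ?y = 0" using sg0 by simp
  have "B (l u) (gmu (l u)) = B (l u) (l ?y)" using comm assms(19) by simp
  also have "\<dots> = B (l (l u)) ?y" using sl by simp
  also have "\<dots> = B (u - lam *\<^sub>R g0 u) ?y"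
  proof -
    have "l (l u) = u - lam *\<^sub>R g0 u" using assms(9,19) by blast
    then show ?thesis by simp
  qed
  also have "\<dots> = B u ?y - lam * B (g0 u) ?y"
    by (simp add: bilinear_lsub[OF bil] bilinear_lmul[OF bil])
  also have "\<dots> = 0" using bum bg by simp
  finally show ?thesis by (simp add: quadric_def)
qed

end
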